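(* Let $V$ be a topological real vector space and $N$ a Minkowski norm on $V$. The following are equivalent: (1) $N$ is strictly sub-convex. (2) $N$ is continuous, and for any two vectors $x\neq y$ in $V$ with $N(x)=N(y)=1$ one has $N\big((x+y)/2\big)<1$.
   Context: Topological real vector spaces are not assumed Hausdorff. A Minkowski norm on a real vector space $V$ is a function $N:V\to\mathbb{R}$ that is non-negative, satisfies $N(\lambda x)=\lambda N(x)$ for all $x\in V$ and real $\lambda>0$, satisfies $N(x+y)\le N(x)+N(y)$ for all $x,y$, and satisfies $N(x)\neq 0$ for $x\neq 0$. For $f:C\to\mathbb{R}$ and $r\in\mathbb{R}$, the sublevel set is $S_r(f)=\{x\in C: f(x)\le r\}$. For a subset $S$ of a topological real vector space, $\mathrm{Aff}(S)$ is its affine hull; the relative interior $\mathrm{ri}(S)$ and relative closure $\mathrm{rc}(S)$ are the interior and closure of $S$ in the subspace topology of $\mathrm{Aff}(S)$. For $x,y$, $]x,y[=\{(1-t)x+ty: t\in[0,1]\}\setminus\{x,y\}$. A subset $C$ is strictly convex if for any two distinct points $x,y\in\mathrm{rc}(C)$ one has $]x,y[\subseteq \mathrm{ri}(C)$. A function $f:C\to\mathbb{R}$ on a subset $C$ of a topological real vector space is strictly sub-convex if $S_r(f)$ is strictly convex for every $r\in\mathbb{R}$. *)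

theory Defs
  imports "HOL-Analysis.Analysis"
begin

text \<open>A topological real vector space (not assumed Hausdorff): the type carries a
  real vector space structure and a topology, and addition and scalar multiplication
  are jointly continuous (product topologies).\<close>
definition topological_real_vector_space :: "'a::{real_vector,topological_space} itself \<Rightarrow> bool" where
  "topological_real_vector_space _ \<longleftrightarrow>
     continuous_on UNIV (\<lambda>p::'a \<times> 'a. fst p + snd p) \<and>
     continuous_on UNIV (\<lambda>p::real \<times> 'a. fst p *\<^sub>R snd p)"

definition minkowski_norm :: "('a::real_vector \<Rightarrow> real) \<Rightarrow> bool" where
  "minkowski_norm N \<longleftrightarrow>
     (\<forall>x. 0 \<le> N x) \<and>
     (\<forall>x. \<forall>c::real. c > 0 \<longrightarrow> N (c *\<^sub>R x) = c * N x) \<and>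
     (\<forall>x y. N (x + y) \<le> N x + N y) \<and>
     (\<forall>x. x \<noteq> 0 \<longrightarrow> N x \<noteq> 0)"

definition sublevel_set :: "'a set \<Rightarrow> ('a \<Rightarrow> real) \<Rightarrow> real \<Rightarrow> 'a set" where
  "sublevel_set C f r = {x \<in> C. f x \<le> r}"

definition rel_int :: "'a::{real_vector,topological_space} set \<Rightarrow> 'a set" where
  "rel_int S = (top_of_set (affine hull S)) interior_of S"

definition rel_closure :: "'a::{real_vector,topological_space} set \<Rightarrow> 'a set" where
  "rel_closure S = (top_of_set (affine hull S)) closure_of S"

definition strictly_convex_set :: "'a::{real_vector,topological_space} set \<Rightarrow> bool" where
  "strictly_convex_set C \<longleftrightarrow>
     (\<forall>x\<in>rel_closure C. \<forall>y\<in>rel_closure C. x \<noteq> y \<longrightarrow> open_segment x y \<subseteq> rel_int C)"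

definition strictly_sub_convex ::
    "'a::{real_vector,topological_space} set \<Rightarrow> ('a \<Rightarrow> real) \<Rightarrow> bool" where
  "strictly_sub_convex C f \<longleftrightarrow> (\<forall>r::real. strictly_convex_set (sublevel_set C f r))"

end

theory Submission
  imports Defs
begin

lemma mn_facts:
  assumes "minkowski_norm N"
  shows "N 0 = 0" "\<And>x. 0 \<le> N x" "\<And>x y. N (x + y) \<le> N x + N y"
    "\<And>x c. c \<ge> 0 \<Longrightarrow> N (c *\<^sub>R x) = c * N x"
    "\<And>x. x \<noteq> 0 \<Longrightarrow> N x > 0"
proof -
  have h: "\<And>x c. c > 0 \<Longrightarrow> N (c *\<^sub>R x) = c * N x" using assms unfolding minkowski_norm_def by blast
  have "N ((2::real) *\<^sub>R 0) = 2 * N 0" by (rule h) simp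
  then show N0: "N 0 = 0" by simp
  show "\<And>x. 0 \<le> N x" using assms unfolding minkowski_norm_def by blast
  show "\<And>x y. N (x + y) \<le> N x + N y" using assms unfolding minkowski_norm_def by blast
  show "\<And>x c. c \<ge> 0 \<Longrightarrow> N (c *\<^sub>R x) = c * N x"
  proof -
    fix x and c :: real assume "c \<ge> 0"
    then show "N (c *\<^sub>R x) = c * N x"
    proof (cases "c = 0")
      case True then show ?thesis using N0 by simp
    next
      case False then show ?thesis using h \<open>c \<ge> 0\<close> by simp
    qed
  qed
  show "\<And>x. x \<noteq> 0 \<Longrightarrow> N x > 0"
  proof -
    fix x :: 'a assume "x \<noteq> 0"
    then have "N x \<noteq> 0" using assms unfolding minkowski_norm_def by blast
    moreover have "N x \<ge> 0" using assms unfolding minkowski_norm_def by blast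
    ultimately show "N x > 0" by simp
  qed
qed

lemma mn_convex:
  assumes "minkowski_norm N" "0 \<le> t" "t \<le> 1"
  shows "N ((1 - t) *\<^sub>R x + t *\<^sub>R y) \<le> (1 - t) * N x + t * N y"
proof -
  note f = mn_facts[OF assms(1)]
  have "N ((1 - t) *\<^sub>R x + t *\<^sub>R y) \<le> N ((1 - t) *\<^sub>R x) + N (t *\<^sub>R y)" by (rule f(3))
  also have "\<dots> = (1 - t) * N x + t * N y" using f(4) assms(2,3) by simp
  finally show ?thesis .
qed

lemma sub_eq: "sublevel_set UNIV N r = {x. N x \<le> r}"
  by (auto simp: sublevel_set_def)

lemma hull_univ:
  assumes "minkowski_norm N" "r > 0"
  shows "affine hull {x. N x \<le> r} = UNIV"
proof -
  note f = mn_facts[OF assms(1)]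
  have "0 \<in> affine hull {x. N x \<le> r}" using f(1) assms(2) by (simp add: hull_inc)
  then have e: "affine hull {x. N x \<le> r} = span {x. N x \<le> r}" by (rule affine_hull_span_0)
  have "v \<in> span {x. N x \<le> r}" for v
  proof (cases "v = 0")
    case True then show ?thesis by (simp add: span_zero)
  next
    case False
    then have p: "N v > 0" using f(5) by blast
    define c where "c = r / N v"
    have c: "c > 0" using p assms(2) by (simp add: c_def)
    have "N (c *\<^sub>R v) = r" using f(4)[of c v] c p by (simp add: c_def)
    then have "c *\<^sub>R v \<in> span {x. N x \<le> r}" by (simp add: span_base)
    then have "(1/c) *\<^sub>R (c *\<^sub>R v) \<in> span {x. N x \<le> r}" by (rule span_scale)
    then show ?thesis using c by simp
  qed
  then show ?thesis using e by auto
qed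

lemma rel_int_open:
  assumes "minkowski_norm N" "r > 0" "z \<in> rel_int {x. N x \<le> r}"
  shows "\<exists>U. open U \<and> z \<in> U \<and> U \<subseteq> {x. N x \<le> r}"
proof -
  have "z \<in> euclidean interior_of {x. N x \<le> r}"
    using assms(3) unfolding rel_int_def hull_univ[OF assms(1,2)] by simp
  then show ?thesis unfolding interior_of_def by auto
qed

lemma strict_lemma:
  assumes mn: "minkowski_norm N"
    and mid: "\<forall>x y. x \<noteq> y \<and> N x = 1 \<and> N y = 1 \<longrightarrow> N ((1/2) *\<^sub>R (x + y)) < 1"
    and x: "N x \<le> r" and y: "N y \<le> r" and xy: "x \<noteq> y" and t: "0 < t" "t < 1"
  shows "N ((1 - t) *\<^sub>R x + t *\<^sub>R y) < r"
proof (rule ccontr)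
  note f = mn_facts[OF mn]
  define z where "z = (1 - t) *\<^sub>R x + t *\<^sub>R y"
  assume "\<not> N ((1 - t) *\<^sub>R x + t *\<^sub>R y) < r"
  then have zr: "N z \<ge> r" by (simp add: z_def)
  have r: "r > 0"
  proof (rule ccontr)
    assume "\<not> r > 0"
    then have "x = 0" "y = 0" using x y f(5) by force+
    then show False using xy by simp
  qed
  have cz: "N z \<le> (1 - t) * N x + t * N y" unfolding z_def using mn_convex[OF mn] t by simp
  have a1: "(1 - t) * (r - N x) \<ge> 0" "t * (r - N y) \<ge> 0" using t x y by simp_all
  have "(1 - t) * (r - N x) + t * (r - N y) \<le> 0" using cz zr by (simp add: algebra_simps)
  then have "(1 - t) * (r - N x) = 0" "t * (r - N y) = 0" using a1 by linarith+
  then have nx: "N x = r" and ny: "N y = r" using t by simp_all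
  define m where "m = (1/2) *\<^sub>R (x + y)"
  have nm: "N m \<ge> r"
  proof (cases "t \<le> 1/2")
    case True
    have ez: "z = (1 - 2*t) *\<^sub>R x + (2*t) *\<^sub>R m"
    proof -
      have e1: "(2*t) *\<^sub>R m = t *\<^sub>R x + t *\<^sub>R y"
        unfolding m_def by (simp add: scaleR_add_right)
      have e2: "(1 - 2*t) *\<^sub>R x + t *\<^sub>R x = (1 - t) *\<^sub>R x"
        by (simp add: scaleR_left_distrib[symmetric])
      show ?thesis unfolding z_def e1 using e2 by (simp add: add.assoc[symmetric])
    qed
    have "N ((1 - 2*t) *\<^sub>R x + (2*t) *\<^sub>R m) \<le> (1 - 2*t) * N x + (2*t) * N m"
      by (rule mn_convex[OF mn]) (use True t in simp_all)
    then have h1: "r \<le> (1 - 2*t) * r + (2*t) * N m" using zr nx ez by simp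
    have t2: "2*t > 0" using t by simp
    have "(2*t) * r \<le> (2*t) * N m" using h1 by (simp add: algebra_simps)
    then show ?thesis using t2 by (simp only: mult_le_cancel_left_pos)
  next
    case False
    have ez: "z = (1 - (2*t - 1)) *\<^sub>R m + (2*t - 1) *\<^sub>R y"
    proof -
      have c: "(1 - (2*t - 1)) * (1/2) = 1 - t" by simp
      have e1: "(1 - (2*t - 1)) *\<^sub>R m = (1 - t) *\<^sub>R x + (1 - t) *\<^sub>R y"
        unfolding m_def scaleR_scaleR c by (simp add: scaleR_add_right)
      have e2: "(1 - t) *\<^sub>R y + (2*t - 1) *\<^sub>R y = t *\<^sub>R y"
        by (simp add: scaleR_left_distrib[symmetric])
      show ?thesis unfolding z_def e1 using e2 by (simp add: add.assoc)
    qed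
    have "N ((1 - (2*t - 1)) *\<^sub>R m + (2*t - 1) *\<^sub>R y) \<le> (1 - (2*t - 1)) * N m + (2*t - 1) * N y"
      by (rule mn_convex[OF mn]) (use False t in simp_all)
    then have h1: "r \<le> (1 - (2*t - 1)) * N m + (2*t - 1) * r" using zr ny ez by simp
    have t2: "2 - 2*t > 0" using t by simp
    have "(2 - 2*t) * r \<le> (2 - 2*t) * N m" using h1 by (simp add: algebra_simps)
    then show ?thesis using t2 by (simp only: mult_le_cancel_left_pos)
  qed
  have d: "(1/r) *\<^sub>R x \<noteq> (1/r) *\<^sub>R y" using xy r by simp
  have n1: "N ((1/r) *\<^sub>R x) = 1" using f(4)[of "1/r" x] r nx by simp
  have n2: "N ((1/r) *\<^sub>R y) = 1" using f(4)[of "1/r" y] r ny by simp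
  have lt: "N ((1/2) *\<^sub>R ((1/r) *\<^sub>R x + (1/r) *\<^sub>R y)) < 1"
    by (rule mid[rule_format]) (intro conjI d n1 n2)
  have eq: "(1/2) *\<^sub>R ((1/r) *\<^sub>R x + (1/r) *\<^sub>R y) = (1/r) *\<^sub>R m"
    by (simp add: m_def algebra_simps)
  have "N ((1/r) *\<^sub>R m) = (1/r) * N m" using f(4)[of "1/r" m] r by simp
  then have "N m / r < 1" using lt eq by simp
  then have "N m < r" using r by (simp add: divide_less_eq)
  then show False using nm by simp
qed

lemma dir2:
  assumes mn: "minkowski_norm N" and cont: "continuous_on UNIV N"
    and mid: "\<forall>x y. x \<noteq> y \<and> N x = 1 \<and> N y = 1 \<longrightarrow> N ((1/2) *\<^sub>R (x + y)) < 1"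
  shows "strictly_sub_convex UNIV N"
  unfolding strictly_sub_convex_def strictly_convex_set_def sub_eq
proof (intro allI ballI impI)
  fix r x y
  let ?S = "{x. N x \<le> r}"
  let ?A = "affine hull ?S"
  assume xc: "x \<in> rel_closure ?S" and yc: "y \<in> rel_closure ?S" and xy: "x \<noteq> y"
  have closedS: "closed ?S" by (rule closed_Collect_le[OF cont continuous_on_const])
  have "rel_closure ?S \<subseteq> ?A \<inter> ?S" unfolding rel_closure_def
    by (rule closure_of_minimal) (auto simp: hull_subset closedin_closed_Int[OF closedS])
  then have nx: "N x \<le> r" and ny: "N y \<le> r" using xc yc by auto
  have openT: "open {z. N z < r}" by (rule open_Collect_less[OF cont continuous_on_const])
  have "?A \<inter> {z. N z < r} \<subseteq> rel_int ?S" unfolding rel_int_def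
    by (rule interior_of_maximal) (auto intro: openin_open_Int[OF openT])
  moreover have "open_segment x y \<subseteq> ?A \<inter> {z. N z < r}"
  proof
    fix z assume "z \<in> open_segment x y"
    then obtain u where u: "0 < u" "u < 1" "z = (1 - u) *\<^sub>R x + u *\<^sub>R y"
      unfolding in_segment by blast
    then have "N z < r" using strict_lemma[OF mn mid nx ny xy u(1,2)] by simp
    moreover then have "z \<in> ?A" using hull_subset[of ?S affine] by auto
    ultimately show "z \<in> ?A \<inter> {z. N z < r}" by simp
  qed
  ultimately show "open_segment x y \<subseteq> rel_int ?S" by blast
qed

lemma scal_cont:
  assumes cs: "continuous_on UNIV (\<lambda>p::real \<times> 'a::{real_vector,topological_space}. fst p *\<^sub>R snd p)"
  shows "continuous_on UNIV (\<lambda>t::real. t *\<^sub>R (z::'a))"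
  using continuous_on_compose2[OF cs, of UNIV "\<lambda>t. (t, z)"]
  by (simp add: continuous_on_Pair continuous_on_id continuous_on_const)

lemma add_cont:
  assumes ca: "continuous_on UNIV (\<lambda>p::'a::{real_vector,topological_space} \<times> 'a. fst p + snd p)"
  shows "continuous_on UNIV (\<lambda>y::'a. y + c)"
proof -
  have p: "continuous_on UNIV (\<lambda>y::'a. (y, c))"
    by (intro continuous_on_Pair continuous_on_id continuous_on_const)
  have "continuous_on UNIV ((\<lambda>p::'a \<times> 'a. fst p + snd p) \<circ> (\<lambda>y::'a. (y, c)))"
    by (rule continuous_on_compose[OF p continuous_on_subset[OF ca]]) simp
  then show ?thesis by (simp add: o_def)
qed

lemma scal_cont2:
  assumes cs: "continuous_on UNIV (\<lambda>p::real \<times> 'a::{real_vector,topological_space}. fst p *\<^sub>R snd p)"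
  shows "continuous_on UNIV (\<lambda>y::'a. (c::real) *\<^sub>R y)"
proof -
  have p: "continuous_on UNIV (\<lambda>y::'a. (c, y))"
    by (intro continuous_on_Pair continuous_on_id continuous_on_const)
  have "continuous_on UNIV ((\<lambda>p::real \<times> 'a. fst p *\<^sub>R snd p) \<circ> (\<lambda>y::'a. (c, y)))"
    by (rule continuous_on_compose[OF p continuous_on_subset[OF cs]]) simp
  then show ?thesis by (simp add: o_def)
qed

lemma rel_int_lt:
  assumes mn: "minkowski_norm N" and r: "r > 0" and z: "z \<in> rel_int {x. N x \<le> r}"
    and cs: "continuous_on UNIV (\<lambda>p::real \<times> 'a::{real_vector,topological_space}. fst p *\<^sub>R snd p)"
  shows "N (z::'a) < r"
proof (rule ccontr)
  note f = mn_facts[OF mn]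
  assume "\<not> N z < r"
  then have zr: "N z \<ge> r" by simp
  obtain U where U: "open U" "z \<in> U" "U \<subseteq> {x. N x \<le> r}" using rel_int_open[OF mn r z] by blast
  have o1: "open ((\<lambda>t::real. t *\<^sub>R z) -` U \<inter> UNIV)"
    using continuous_on_open_vimage[OF open_UNIV, of "\<lambda>t::real. t *\<^sub>R z"] scal_cont[OF cs] U(1) by simp
  have o2: "1 \<in> (\<lambda>t::real. t *\<^sub>R z) -` U \<inter> UNIV" using U(2) by simp
  obtain e where e: "e > 0" "ball 1 e \<subseteq> (\<lambda>t::real. t *\<^sub>R z) -` U \<inter> UNIV"
    using openE[OF o1 o2] by blast
  have "1 + e/2 \<in> ball (1::real) e" using e(1) by (simp add: dist_real_def)
  then have "(1 + e/2) *\<^sub>R z \<in> U" using e(2) by blast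
  then have "N ((1 + e/2) *\<^sub>R z) \<le> r" using U(3) by blast
  moreover have "N ((1 + e/2) *\<^sub>R z) = (1 + e/2) * N z" using f(4) e(1) by simp
  moreover have "(1 + e/2) * N z > N z" using e(1) zr r by simp
  ultimately show False using zr by simp
qed

lemma in_rel_closure:
  assumes "N x \<le> r" shows "x \<in> rel_closure {x. N x \<le> r}"
proof -
  have "{x. N x \<le> r} \<subseteq> rel_closure {x. N x \<le> r}" unfolding rel_closure_def
    by (rule closure_of_subset) (simp add: hull_subset)
  then show ?thesis using assms by blast
qed

lemma zero_nbhd:
  fixes N :: "'a::{real_vector,topological_space} \<Rightarrow> real" and v :: 'a
  assumes mn: "minkowski_norm N" and e: "e > 0" and v: "v \<noteq> 0"
    and ssc: "strictly_sub_convex UNIV N"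
    and cs: "continuous_on UNIV (\<lambda>p::real \<times> 'a::{real_vector,topological_space}. fst p *\<^sub>R snd p)"
  shows "\<exists>U. open U \<and> (0::'a) \<in> U \<and> U \<subseteq> {x. N x \<le> e}"
proof -
  note f = mn_facts[OF mn]
  have pv: "N v > 0" and pmv: "N (-v) > 0" using f(5) v by auto
  define \<alpha> where "\<alpha> = e / N v"
  define \<beta> where "\<beta> = e / N (-v)"
  have ab: "\<alpha> > 0" "\<beta> > 0" using pv pmv e by (simp_all add: \<alpha>_def \<beta>_def)
  define a where "a = \<alpha> *\<^sub>R v"
  define b where "b = \<beta> *\<^sub>R (-v)"
  have na: "N a = e" using f(4)[of \<alpha> v] ab pv by (simp add: a_def \<alpha>_def)
  have nb: "N b = e" using f(4)[of \<beta> "-v"] ab pmv by (simp add: b_def \<beta>_def)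
  have aneb: "a \<noteq> b"
  proof
    assume "a = b"
    then have "(\<alpha> + \<beta>) *\<^sub>R v = 0" by (simp add: a_def b_def algebra_simps)
    then show False using ab v by simp
  qed
  define u where "u = \<alpha> / (\<alpha> + \<beta>)"
  have u: "0 < u" "u < 1" using ab by (simp_all add: u_def)
  have "(1 - u) *\<^sub>R a + u *\<^sub>R b = ((1 - u) * \<alpha> - u * \<beta>) *\<^sub>R v"
    by (simp add: a_def b_def algebra_simps)
  also have "(1 - u) * \<alpha> - u * \<beta> = 0" using ab by (simp add: u_def field_simps)
  finally have "0 \<in> open_segment a b" using u aneb unfolding in_segment by force
  moreover have "a \<in> rel_closure {x. N x \<le> e}" "b \<in> rel_closure {x. N x \<le> e}"
    using in_rel_closure na nb by (metis order_refl)+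
  ultimately have "0 \<in> rel_int {x. N x \<le> e}" using ssc aneb
    unfolding strictly_sub_convex_def strictly_convex_set_def sub_eq by blast
  then show ?thesis using rel_int_open[OF mn e] by blast
qed

lemma dir1:
  fixes N :: "'a::{real_vector,topological_space} \<Rightarrow> real"
  assumes tvs: "topological_real_vector_space TYPE('a)"
    and mn: "minkowski_norm N" and ssc: "strictly_sub_convex UNIV N"
  shows "continuous_on UNIV N \<and>
          (\<forall>x y. x \<noteq> y \<and> N x = 1 \<and> N y = 1 \<longrightarrow> N ((1/2) *\<^sub>R (x + y)) < 1)"
proof
  note f = mn_facts[OF mn]
  have ca: "continuous_on UNIV (\<lambda>p::'a \<times> 'a. fst p + snd p)"
    and cs: "continuous_on UNIV (\<lambda>p::real \<times> 'a. fst p *\<^sub>R snd p)"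
    using tvs unfolding topological_real_vector_space_def by auto
  show "\<forall>x y. x \<noteq> y \<and> N x = 1 \<and> N y = 1 \<longrightarrow> N ((1/2) *\<^sub>R (x + y)) < 1"
  proof (intro allI impI)
    fix x y :: 'a assume h: "x \<noteq> y \<and> N x = 1 \<and> N y = 1"
    then have "x \<in> rel_closure {x. N x \<le> 1}" "y \<in> rel_closure {x. N x \<le> 1}"
      using in_rel_closure by (metis order_refl)+
    moreover have "(1/2) *\<^sub>R (x + y) \<in> open_segment x y"
      unfolding in_segment using h by (rule_tac conjI, simp, rule_tac x="1/2" in exI, simp add: algebra_simps)
    ultimately have "(1/2) *\<^sub>R (x + y) \<in> rel_int {x. N x \<le> 1}" using ssc h
      unfolding strictly_sub_convex_def strictly_convex_set_def sub_eq by blast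
    then show "N ((1/2) *\<^sub>R (x + y)) < 1" using rel_int_lt[OF mn _ _ cs] by simp
  qed
  show "continuous_on UNIV N"
  proof (cases "\<exists>v::'a. v \<noteq> 0")
    case False
    then have y0: "\<And>y::'a. y = 0" by blast
    have ceq: "continuous_on UNIV N = continuous_on UNIV (\<lambda>_::'a. N 0)"
      by (rule continuous_on_cong[OF refl]) (metis y0)
    show ?thesis unfolding ceq by (rule continuous_on_const)
  next
    case True
    then obtain v :: 'a where v: "v \<noteq> 0" by blast
    have tr: "continuous_on UNIV (\<lambda>y::'a. y + c)" for c
      by (rule add_cont[OF ca])
    have ng: "continuous_on UNIV (\<lambda>y::'a. (-1::real) *\<^sub>R y)"
      by (rule scal_cont2[OF cs])
    have tr2: "continuous_on UNIV (\<lambda>y::'a. x - y)" for x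
    proof -
      have "continuous_on UNIV ((\<lambda>y::'a. y + x) \<circ> (\<lambda>y::'a. (-1::real) *\<^sub>R y))"
        by (rule continuous_on_compose[OF ng continuous_on_subset[OF tr[of x]]]) simp
      moreover have "((\<lambda>y::'a. y + x) \<circ> (\<lambda>y::'a. (-1::real) *\<^sub>R y)) = (\<lambda>y. x - y)"
        by (rule ext) simp
      ultimately show ?thesis by simp
    qed
    show ?thesis unfolding continuous_on_def
    proof (rule ballI)
      fix x :: 'a
      assume "x \<in> UNIV"
      show "(N \<longlongrightarrow> N x) (at x within UNIV)" unfolding tendsto_iff
      proof (intro allI impI)
        fix e :: real assume e: "e > 0"
        have ex: "\<exists>U. open U \<and> (0::'a) \<in> U \<and> U \<subseteq> {x. N x \<le> e/2}"
          by (rule zero_nbhd[OF mn _ v ssc cs]) (simp add: e)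
        then obtain U where U: "open U" "(0::'a) \<in> U" "U \<subseteq> {x. N x \<le> e/2}"
          by blast
        let ?W = "((\<lambda>y. y + (-x)) -` U \<inter> UNIV) \<inter> ((\<lambda>y. x - y) -` U \<inter> UNIV)"
        have o1: "open ((\<lambda>y. y + (-x)) -` U \<inter> UNIV)"
          by (rule continuous_on_open_vimage[OF open_UNIV, THEN iffD1, OF tr[of "-x"], rule_format, OF U(1)])
        have o2: "open ((\<lambda>y. x - y) -` U \<inter> UNIV)"
          by (rule continuous_on_open_vimage[OF open_UNIV, THEN iffD1, OF tr2[of x], rule_format, OF U(1)])
        have oW: "open ?W" by (rule open_Int[OF o1 o2])
        have xW: "x \<in> ?W" using U(2) by (intro IntI vimageI2 UNIV_I) simp_all
        have allW: "\<forall>y\<in>?W. dist (N y) (N x) < e"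
        proof
          fix y assume "y \<in> ?W"
          then have w1: "y + - x \<in> U" and w2: "x - y \<in> U" by auto
          have "y + - x = y - x" by simp
          then have w1': "y - x \<in> U" using w1 by simp
          have a: "N (y - x) \<le> e/2" using subsetD[OF U(3) w1'] by (simp only: mem_Collect_eq)
          have b: "N (x - y) \<le> e/2" using subsetD[OF U(3) w2] by (simp only: mem_Collect_eq)
          have c1: "N (y - x + x) \<le> N (y - x) + N x" by (rule f(3))
          have c2: "N (x - y + y) \<le> N (x - y) + N y" by (rule f(3))
          have "y - x + x = y" "x - y + y = x" by simp_all
          then have c1': "N y \<le> N (y - x) + N x" and c2': "N x \<le> N (x - y) + N y"
            using c1 c2 by simp_all
          have "\<bar>N y - N x\<bar> < e" unfolding abs_less_iff using a b c1' c2' e by linarith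
          then show "dist (N y) (N x) < e" by (simp only: dist_real_def)
        qed
        show "eventually (\<lambda>y. dist (N y) (N x) < e) (at x within UNIV)"
          unfolding eventually_at_topological
          by (rule exI[of _ ?W]) (use oW xW allW in blast)
      qed
    qed
  qed
qed

theorem mainTheorem1:
  fixes N :: "'a::{real_vector,topological_space} \<Rightarrow> real"
  assumes "topological_real_vector_space TYPE('a)"
    and "minkowski_norm N"
  shows "strictly_sub_convex UNIV N \<longleftrightarrow>
         (continuous_on UNIV N \<and>
          (\<forall>x y. x \<noteq> y \<and> N x = 1 \<and> N y = 1 \<longrightarrow> N ((1/2) *\<^sub>R (x + y)) < 1))"
proof
  assume "strictly_sub_convex UNIV N"
  then show "continuous_on UNIV N \<and>
          (\<forall>x y. x \<noteq> y \<and> N x = 1 \<and> N y = 1 \<longrightarrow> N ((1/2) *\<^sub>R (x + y)) < 1)"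
    by (rule dir1[OF assms])
next
  assume h: "continuous_on UNIV N \<and>
          (\<forall>x y. x \<noteq> y \<and> N x = 1 \<and> N y = 1 \<longrightarrow> N ((1/2) *\<^sub>R (x + y)) < 1)"
  show "strictly_sub_convex UNIV N"
    by (rule dir2[OF assms(2) conjunct1[OF h] conjunct2[OF h]])
qed

end
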